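(* Let $d\geq 2$ and $U=(u_{ij})_{i,j=1}^d\in\mathcal{U}_d(\mathbb{C})$. The following two conditions are equivalent: (H1) there exist $M\in\mathbb{N}$ and $D_1,\dots,D_{2M}\in\mathcal{DU}_d(\mathbb{C})$ such that $D_1U^\dagger D_2UD_3U^\dagger D_4U\cdots D_{2M-1}U^\dagger D_{2M}U$ is a matrix with all entries non-zero; (H2) there exists $M\in\mathbb{N}$ such that $(P_U^TP_U)^M$ is a matrix with all entries non-zero.
   Context: $\mathcal{U}_d(\mathbb{C})$ denotes the group of $d\times d$ unitary matrices and $\mathcal{DU}_d(\mathbb{C})$ its subgroup of diagonal unitary matrices $\sum_i u_{ii}|i\rangle\langle i|$ with $|u_{ii}|=1$. $P_U=(p_{ij})$ is the $0/1$ matrix with $p_{ij}=0$ if $u_{ij}=0$ and $p_{ij}=1$ if $u_{ij}\neq 0$. *)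

theory Defs
  imports "HOL-Analysis.Analysis"
begin

definition cadjoint :: "complex^'n^'n \<Rightarrow> complex^'n^'n" where
  "cadjoint A = (\<chi> i j. cnj (A $ j $ i))"

definition unitary :: "complex^'n^'n \<Rightarrow> bool" where
  "unitary U \<longleftrightarrow> U ** cadjoint U = mat 1 \<and> cadjoint U ** U = mat 1"

definition diag_unitary :: "complex^'n^'n \<Rightarrow> bool" where
  "diag_unitary D \<longleftrightarrow> (\<forall>i j. i \<noteq> j \<longrightarrow> D $ i $ j = 0) \<and> (\<forall>i. norm (D $ i $ i) = 1)"

primrec matpow :: "'a::semiring_1^'n^'n \<Rightarrow> nat \<Rightarrow> 'a^'n^'n" where
  "matpow A 0 = mat 1"
| "matpow A (Suc m) = matpow A m ** A"

primrec word_H1 :: "(nat \<Rightarrow> complex^'n^'n) \<Rightarrow> complex^'n^'n \<Rightarrow> nat \<Rightarrow> complex^'n^'n" where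
  "word_H1 D U 0 = mat 1"
| "word_H1 D U (Suc m) =
     word_H1 D U m ** (D (2*m+1) ** cadjoint U ** D (2*m+2) ** U)"

definition pattern :: "complex^'n^'n \<Rightarrow> nat^'n^'n" where
  "pattern U = (\<chi> i j. if U $ i $ j = 0 then 0 else 1)"

definition all_nonzero :: "'a::zero^'n^'n \<Rightarrow> bool" where
  "all_nonzero A \<longleftrightarrow> (\<forall>i j. A $ i $ j \<noteq> 0)"

end

theory Submission
  imports Defs
begin
lemma infinite_circle: "infinite {t::complex. norm t = 1}"
proof
  assume f: "finite {t::complex. norm t = 1}"
  have eq: "{t::complex. norm t = 1} = sphere 0 1" by (auto simp: sphere_def dist_norm)
  have c: "connected (sphere (0::complex) 1)" by (rule connected_sphere) simp
  have f2: "finite (sphere (0::complex) 1)" using f eq by simp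
  have "sphere (0::complex) 1 = {} \<or> (\<exists>a. sphere (0::complex) 1 = {a})"
    using connected_finite_iff_sing[OF c] f2 by blast
  moreover have "(1::complex) \<in> sphere 0 1" "(-1::complex) \<in> sphere 0 1" by auto
  ultimately obtain a where "(1::complex) = a" "(-1::complex) = a" by blast
  then show False by simp
qed
lemma pick_circle:
  assumes "finite (B::complex set)"
  obtains t where "norm t = 1" "t \<notin> B"
proof -
  have "infinite ({t::complex. norm t = 1} - B)"
    using infinite_circle assms by (simp add: Diff_infinite_finite)
  then have "{t::complex. norm t = 1} - B \<noteq> {}" by (metis finite.emptyI)
  then obtain t where "t \<in> {t::complex. norm t = 1} - B" by blast
  then show ?thesis using that by blast
qed
lemma lin_avoid:
  fixes c :: "'r \<Rightarrow> 'k \<Rightarrow> complex"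
  assumes "finite S" "finite R"
  shows "\<exists>x. (\<forall>k. norm (x k) = 1) \<and>
     (\<forall>r\<in>R. (\<exists>k\<in>S. c r k \<noteq> 0) \<longrightarrow> (\<Sum>k\<in>S. c r k * x k) \<noteq> 0)"
  using assms(1)
proof (induction S rule: finite_induct)
  case empty
  show ?case by (rule exI[of _ "\<lambda>_. 1"]) simp
next
  case (insert a S)
  then obtain x where x1: "\<forall>k. norm (x k) = 1"
    and x2: "\<forall>r\<in>R. (\<exists>k\<in>S. c r k \<noteq> 0) \<longrightarrow> (\<Sum>k\<in>S. c r k * x k) \<noteq> 0" by blast
  define B where "B = (\<lambda>r. - (\<Sum>k\<in>S. c r k * x k) / c r a) ` {r\<in>R. c r a \<noteq> 0}"
  have "finite B" unfolding B_def using assms(2) by simp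
  then obtain t where t: "norm t = 1" "t \<notin> B" by (rule pick_circle)
  define x' where "x' = x(a := t)"
  have sumeq: "(\<Sum>k\<in>S. c r k * x' k) = (\<Sum>k\<in>S. c r k * x k)" for r
    using insert(2) unfolding x'_def by (intro sum.cong) auto
  show ?case
  proof (intro exI[of _ x'] conjI ballI impI)
    show "\<forall>k. norm (x' k) = 1" using x1 t unfolding x'_def by simp
  next
    fix r assume r: "r \<in> R" and ex: "\<exists>k\<in>insert a S. c r k \<noteq> 0"
    have s: "(\<Sum>k\<in>insert a S. c r k * x' k) = c r a * t + (\<Sum>k\<in>S. c r k * x k)"
      using insert(1,2) sumeq unfolding x'_def by simp
    show "(\<Sum>k\<in>insert a S. c r k * x' k) \<noteq> 0"
    proof (cases "c r a = 0")
      case True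
      then have "\<exists>k\<in>S. c r k \<noteq> 0" using ex by auto
      then show ?thesis using x2 r s True by simp
    next
      case False
      show ?thesis
      proof
        assume "(\<Sum>k\<in>insert a S. c r k * x' k) = 0"
        then have "t = - (\<Sum>k\<in>S. c r k * x k) / c r a" using s False
          by (simp add: field_simps add_eq_0_iff)
        then have "t \<in> B" unfolding B_def using r False by auto
        then show False using t by simp
      qed
    qed
  qed
qed



definition dmat :: "('d \<Rightarrow> complex) \<Rightarrow> complex^'d^'d" where
  "dmat x = (\<chi> i j. if i = j then x i else 0)"

lemma diag_mul_left:
  assumes "\<forall>i j. i \<noteq> j \<longrightarrow> D $ i $ j = 0"
  shows "(D ** A) $ i $ j = D $ i $ i * A $ i $ j"
proof -
  have "(D ** A) $ i $ j = (\<Sum>k\<in>UNIV. D $ i $ k * A $ k $ j)"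
    by (simp add: matrix_matrix_mult_def)
  also have "\<dots> = (\<Sum>k\<in>UNIV. if k = i then D $ i $ i * A $ i $ j else 0)"
    by (rule sum.cong) (auto simp: assms)
  finally have "(D ** A) $ i $ j = (\<Sum>k\<in>UNIV. if k = i then D $ i $ i * A $ i $ j else 0)" .
  then show ?thesis by simp
qed

lemma diag_mul_right:
  assumes "\<forall>i j. i \<noteq> j \<longrightarrow> D $ i $ j = 0"
  shows "(A ** D) $ i $ j = A $ i $ j * D $ j $ j"
proof -
  have "(A ** D) $ i $ j = (\<Sum>k\<in>UNIV. A $ i $ k * D $ k $ j)"
    by (simp add: matrix_matrix_mult_def)
  also have "\<dots> = (\<Sum>k\<in>UNIV. if k = j then A $ i $ j * D $ j $ j else 0)"
    by (rule sum.cong) (auto simp: assms)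
  finally have "(A ** D) $ i $ j = (\<Sum>k\<in>UNIV. if k = j then A $ i $ j * D $ j $ j else 0)" .
  then show ?thesis by simp
qed

lemma dmat_unitary: "(\<forall>k. norm (x k) = 1) \<Longrightarrow> diag_unitary (dmat x)"
  unfolding diag_unitary_def dmat_def by simp

lemma L1:
  fixes A B :: "complex^'d^'d"
  shows "\<exists>D. diag_unitary D \<and> (\<forall>i j. (\<exists>k. A$i$k \<noteq> 0 \<and> B$k$j \<noteq> 0) \<longrightarrow> (A ** D ** B) $ i $ j \<noteq> 0)"
proof -
  obtain x where x1: "\<forall>k. norm (x k) = 1" and
    x2: "\<forall>r\<in>(UNIV::('d\<times>'d) set). (\<exists>k\<in>UNIV. (\<lambda>(i,j) k. A$i$k * B$k$j) r k \<noteq> 0) \<longrightarrow>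
       (\<Sum>k\<in>UNIV. (\<lambda>(i,j) k. A$i$k * B$k$j) r k * x k) \<noteq> 0"
    using lin_avoid[of "UNIV::'d set" "UNIV::('d\<times>'d) set" "\<lambda>(i,j) k. A$i$k * B$k$j"] by auto
  have dg: "\<forall>i j. i \<noteq> j \<longrightarrow> dmat x $ i $ j = 0" unfolding dmat_def by simp
  have e: "(A ** dmat x ** B) $ i $ j = (\<Sum>k\<in>UNIV. A$i$k * B$k$j * x k)" for i j
    unfolding matrix_matrix_mult_def[of "A ** dmat x" B]
    by (simp add: diag_mul_right[OF dg], intro sum.cong) (auto simp: dmat_def)
  show ?thesis
  proof (intro exI[of _ "dmat x"] conjI allI impI)
    show "diag_unitary (dmat x)" using x1 by (rule dmat_unitary)
  next
    fix i j assume "\<exists>k. A$i$k \<noteq> 0 \<and> B$k$j \<noteq> 0"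
    then show "(A ** dmat x ** B) $ i $ j \<noteq> 0" using x2[rule_format, of "(i,j)"] e by auto
  qed
qed

lemma word_cong:
  "(\<forall>k\<in>{1..2*M}. D k = D' k) \<Longrightarrow> word_H1 D U M = word_H1 D' U M"
  by (induction M) auto


lemma sum_c_nz: "(sum f S :: complex) \<noteq> 0 \<Longrightarrow> \<exists>k\<in>S. f k \<noteq> 0"
  by (meson sum.neutral)

lemma mult_nz: "(A ** B) $ i $ j \<noteq> (0::complex) \<Longrightarrow> \<exists>k. A $ i $ k \<noteq> 0 \<and> B $ k $ j \<noteq> 0"
  unfolding matrix_matrix_mult_def by (auto dest!: sum_c_nz)

lemma Q_entry:
  "(transpose (pattern U) ** pattern U) $ k $ j \<noteq> 0 \<longleftrightarrow> (\<exists>l. U $ l $ k \<noteq> 0 \<and> U $ l $ j \<noteq> 0)"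
  unfolding matrix_matrix_mult_def transpose_def pattern_def
  by (auto simp: sum_eq_0_iff)

lemma matpow_entry:
  "matpow Q (Suc m) $ i $ j \<noteq> (0::nat) \<longleftrightarrow> (\<exists>k. matpow Q m $ i $ k \<noteq> 0 \<and> Q $ k $ j \<noteq> 0)"
  by (simp add: matrix_matrix_mult_def sum_eq_0_iff)

lemma dir1:
  "(\<forall>k\<in>{1..2*M}. diag_unitary (D k)) \<Longrightarrow> word_H1 D U M $ i $ j \<noteq> 0 \<Longrightarrow>
    matpow (transpose (pattern U) ** pattern U) M $ i $ j \<noteq> 0"
proof (induction M arbitrary: j)
  case 0
  then show ?case by (simp add: mat_def split: if_splits)
next
  case (Suc m)
  have d1: "diag_unitary (D (2*m+1))" and d2: "diag_unitary (D (2*m+2))"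
    using Suc.prems(1) by auto
  have p: "(word_H1 D U m ** (D (2*m+1) ** cadjoint U ** D (2*m+2) ** U)) $ i $ j \<noteq> 0"
    using Suc.prems(2) by simp
  obtain k where k1: "word_H1 D U m $ i $ k \<noteq> 0"
    and k2: "(D (2*m+1) ** cadjoint U ** D (2*m+2) ** U) $ k $ j \<noteq> 0"
    using mult_nz[OF p] by blast
  obtain l where l1: "(D (2*m+1) ** cadjoint U ** D (2*m+2)) $ k $ l \<noteq> 0"
    and l2: "U $ l $ j \<noteq> 0" using mult_nz[OF k2] by blast
  from l1 have "(D (2*m+1) ** cadjoint U) $ k $ l \<noteq> 0"
    using d2 unfolding diag_unitary_def by (simp add: diag_mul_right)
  then have "U $ l $ k \<noteq> 0"
    using d1 unfolding diag_unitary_def by (simp add: diag_mul_left cadjoint_def)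
  then have q: "(transpose (pattern U) ** pattern U) $ k $ j \<noteq> 0"
    using l2 Q_entry by blast
  have "matpow (transpose (pattern U) ** pattern U) m $ i $ k \<noteq> 0"
    using Suc.IH[of k] Suc.prems(1) k1 by auto
  then show ?case using q matpow_entry by blast
qed

lemma dir2:
  "\<exists>D. (\<forall>k\<in>{1..2*M}. diag_unitary (D k)) \<and>
     (\<forall>i j. matpow (transpose (pattern U) ** pattern U) M $ i $ j \<noteq> 0 \<longrightarrow> word_H1 D U M $ i $ j \<noteq> 0)"
proof (induction M)
  case 0
  show ?case by (auto simp: mat_def)
next
  case (Suc m)
  then obtain D where D1: "\<forall>k\<in>{1..2*m}. diag_unitary (D k)"
    and D2: "\<forall>i j. matpow (transpose (pattern U) ** pattern U) m $ i $ j \<noteq> 0 \<longrightarrow> word_H1 D U m $ i $ j \<noteq> 0"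
    by blast
  let ?W = "word_H1 D U m"
  obtain E1 where E1: "diag_unitary E1"
    "\<forall>i j. (\<exists>k. ?W$i$k \<noteq> 0 \<and> cadjoint U$k$j \<noteq> 0) \<longrightarrow> (?W ** E1 ** cadjoint U) $ i $ j \<noteq> 0"
    using L1 by blast
  let ?C = "?W ** E1 ** cadjoint U"
  obtain E2 where E2: "diag_unitary E2"
    "\<forall>i j. (\<exists>k. ?C$i$k \<noteq> 0 \<and> U$k$j \<noteq> 0) \<longrightarrow> (?C ** E2 ** U) $ i $ j \<noteq> 0"
    using L1 by blast
  define D' where "D' = D(2*m+1 := E1, 2*m+2 := E2)"
  have wc: "word_H1 D' U m = ?W"
    by (rule word_cong[symmetric]) (auto simp: D'_def)
  have weq: "word_H1 D' U (Suc m) = ?C ** E2 ** U"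
  proof -
    have "D' (2*m+1) = E1" "D' (2*m+2) = E2" by (simp_all add: D'_def)
    then show ?thesis by (simp add: wc matrix_mul_assoc)
  qed
  show ?case
  proof (intro exI[of _ D'] conjI allI impI ballI)
    fix k assume "k \<in> {1..2 * Suc m}"
    then show "diag_unitary (D' k)" using D1 E1 E2 by (auto simp: D'_def)
  next
    fix i j assume "matpow (transpose (pattern U) ** pattern U) (Suc m) $ i $ j \<noteq> 0"
    then obtain k where k1: "matpow (transpose (pattern U) ** pattern U) m $ i $ k \<noteq> 0"
      and k2: "(transpose (pattern U) ** pattern U) $ k $ j \<noteq> 0"
      using matpow_entry by blast
    from k2 obtain l where l: "U $ l $ k \<noteq> 0" "U $ l $ j \<noteq> 0" using Q_entry by blast
    have "?W $ i $ k \<noteq> 0" using D2 k1 by blast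
    then have "?C $ i $ l \<noteq> 0" using E1(2) l by (auto simp: cadjoint_def)
    then have "(?C ** E2 ** U) $ i $ j \<noteq> 0" using E2(2) l by blast
    then show "word_H1 D' U (Suc m) $ i $ j \<noteq> 0" using weq by simp
  qed
qed

theorem proposition8:
  fixes U :: "complex^'d^'d"
  assumes "CARD('d) \<ge> 2" and "unitary U"
  shows "(\<exists>M \<ge> 1. \<exists>D :: nat \<Rightarrow> complex^'d^'d.
            (\<forall>k \<in> {1..2*M}. diag_unitary (D k)) \<and> all_nonzero (word_H1 D U M))
     \<longleftrightarrow> (\<exists>M \<ge> 1. all_nonzero (matpow (transpose (pattern U) ** pattern U) M))"
proof
  assume "\<exists>M \<ge> 1. \<exists>D :: nat \<Rightarrow> complex^'d^'d.
            (\<forall>k \<in> {1..2*M}. diag_unitary (D k)) \<and> all_nonzero (word_H1 D U M)"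
  then show "\<exists>M \<ge> 1. all_nonzero (matpow (transpose (pattern U) ** pattern U) M)"
    unfolding all_nonzero_def using dir1 by blast
next
  assume "\<exists>M \<ge> 1. all_nonzero (matpow (transpose (pattern U) ** pattern U) M)"
  then obtain M where M: "M \<ge> 1" "all_nonzero (matpow (transpose (pattern U) ** pattern U) M)" by blast
  obtain D :: "nat \<Rightarrow> complex^'d^'d" where "\<forall>k\<in>{1..2*M}. diag_unitary (D k)"
    "\<forall>i j. matpow (transpose (pattern U) ** pattern U) M $ i $ j \<noteq> 0 \<longrightarrow> word_H1 D U M $ i $ j \<noteq> 0"
    using dir2 by blast
  then show "\<exists>M \<ge> 1. \<exists>D :: nat \<Rightarrow> complex^'d^'d.
            (\<forall>k \<in> {1..2*M}. diag_unitary (D k)) \<and> all_nonzero (word_H1 D U M)"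
    using M unfolding all_nonzero_def by blast
qed

end
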